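(* Let $A$ be a set of integers, each at least $3$, let $A_e$ be the set of even elements of $A$, and let $k\ge 2$ with $2k\notin A$. Then, as $n\to\infty$, $$ex(n,C_{2k},\mathcal C_A)=\Theta\big(ex(n,C_{2k},\mathcal C_{A_e})\big).$$
   Context: $C_k$ denotes the cycle with $k$ vertices; for a set $B$ of integers each at least 3, $\mathcal C_B=\{C_b:b\in B\}$. For a graph $H$ and a family of graphs $\mathcal F$, $ex(n,H,\mathcal F)$ is the maximum number of subgraphs isomorphic to $H$ in an $n$-vertex graph containing no member of $\mathcal F$ as a subgraph. *)

theory Defs
  imports Main "HOL-Library.Landau_Symbols"
begin

definition graph_edges :: "nat \<Rightarrow> nat set set set" where
  "graph_edges n = Pow {e. \<exists>u v. u < n \<and> v < n \<and> u \<noteq> v \<and> e = {u, v}}"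

text \<open>F is the edge set of a cycle of length k (k distinct vertices f 0..f (k-1)).
  For k \<ge> 3 a subgraph isomorphic to C_k is determined by its edge set.\<close>

definition cycle_edges :: "nat \<Rightarrow> nat set set \<Rightarrow> bool" where
  "cycle_edges k F \<longleftrightarrow> (\<exists>f :: nat \<Rightarrow> nat. inj_on f {..<k} \<and>
       F = (\<lambda>i. {f i, f ((i + 1) mod k)}) ` {..<k})"

definition num_cycles :: "nat \<Rightarrow> nat set set \<Rightarrow> nat" where
  "num_cycles k E = card {F. F \<subseteq> E \<and> cycle_edges k F}"

definition has_cycle :: "nat \<Rightarrow> nat set set \<Rightarrow> bool" where
  "has_cycle b E \<longleftrightarrow> (\<exists>F. F \<subseteq> E \<and> cycle_edges b F)"

definition ex_cycles :: "nat \<Rightarrow> nat \<Rightarrow> nat set \<Rightarrow> nat" where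
  "ex_cycles n k B = Max {num_cycles k E | E. E \<in> graph_edges n \<and> (\<forall>b\<in>B. \<not> has_cycle b E)}"

end

theory Submission
  imports Defs
begin

definition crossE :: "nat set \<Rightarrow> nat set set \<Rightarrow> nat set set" where
  "crossE S E = {e\<in>E. \<exists>u v. e = {u,v} \<and> u\<in>S \<and> v\<notin>S}"

lemma cross_sub: "crossE S E \<subseteq> E" unfolding crossE_def by auto

lemma cross_edge: "{a,c} \<in> crossE S E \<Longrightarrow> (a\<in>S \<longleftrightarrow> c\<notin>S)"
  unfolding crossE_def by (auto simp: doubleton_eq_iff)

lemma bip:
  assumes "cycle_edges b F" "F \<subseteq> crossE S E" "odd b"
  shows False
proof -
  obtain f where f: "inj_on f {..<b}" "F = (\<lambda>i. {f i, f ((i + 1) mod b)}) ` {..<b}"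
    using assms(1) unfolding cycle_edges_def by blast
  have H: "f i \<in> S \<longleftrightarrow> f ((i+1) mod b) \<notin> S" if "i < b" for i
  proof -
    have "{f i, f ((i + 1) mod b)} \<in> crossE S E" using f(2) assms(2) that by blast
    thus ?thesis by (rule cross_edge)
  qed
  have alt: "i < b \<Longrightarrow> (f i \<in> S \<longleftrightarrow> (f 0 \<in> S \<longleftrightarrow> even i))" for i
  proof (induction i)
    case 0 then show ?case by simp
  next
    case (Suc i)
    have "(i+1) mod b = Suc i" using Suc.prems by simp
    with H[of i] Suc show ?case by auto
  qed
  have b1: "b \<ge> 1" using assms(3) by presburger
  have "(b - 1 + 1) mod b = 0" using b1 by simp
  with H[of "b-1"] b1 have "f (b-1) \<in> S \<longleftrightarrow> f 0 \<notin> S" by simp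
  moreover have "even (b-1)" using assms(3) b1 by simp
  ultimately show False using alt[of "b-1"] b1 by simp
qed

lemma fin_graph: "E \<in> graph_edges n \<Longrightarrow> finite E"
proof -
  assume "E \<in> graph_edges n"
  hence "E \<subseteq> Pow {..<n}" unfolding graph_edges_def by auto
  thus "finite E" by (meson finite_Pow_iff finite_lessThan finite_subset)
qed

lemma fin_graphs: "finite (graph_edges n)"
proof -
  have "graph_edges n \<subseteq> Pow (Pow {..<n})" unfolding graph_edges_def by auto
  thus ?thesis by (meson finite_Pow_iff finite_lessThan finite_subset)
qed

lemma cnt:
  assumes "cycle_edges (2*k) F" "F \<subseteq> E" "E \<in> graph_edges n" "k \<ge> 1"
  shows "2*k \<le> n \<and> 2^(n-2*k) \<le> card {S \<in> Pow {..<n}. F \<subseteq> crossE S E}"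
proof -
  obtain f where f: "inj_on f {..<2*k}" "F = (\<lambda>i. {f i, f ((i + 1) mod (2*k))}) ` {..<2*k}"
    using assms(1) unfolding cycle_edges_def by blast
  define V where "V = f ` {..<2*k}"
  define P where "P = f ` {i. i<2*k \<and> even i}"
  have Vn: "V \<subseteq> {..<n}"
  proof
    fix x assume "x \<in> V"
    then obtain i where i: "i < 2*k" "x = f i" unfolding V_def by auto
    have "{f i, f ((i + 1) mod (2*k))} \<in> E" using f(2) i assms(2) by blast
    then obtain u v where "u<n" "v<n" "{f i, f ((i + 1) mod (2*k))} = {u,v}"
      using assms(3) unfolding graph_edges_def by blast
    thus "x \<in> {..<n}" using i by (auto simp: doubleton_eq_iff)
  qed
  have cV: "card V = 2*k" unfolding V_def using f(1) by (simp add: card_image)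
  have kn: "2*k \<le> n" using card_mono[OF _ Vn] cV by simp
  have PV: "P \<subseteq> V" unfolding P_def V_def by auto
  have mem: "x < 2*k \<Longrightarrow> T \<subseteq> {..<n} - V \<Longrightarrow> (f x \<in> T \<union> P \<longleftrightarrow> even x)" for x T
  proof -
    assume x: "x < 2*k" and T: "T \<subseteq> {..<n} - V"
    have "f x \<notin> T" using T x unfolding V_def by auto
    moreover have "f x \<in> P \<longleftrightarrow> even x"
    proof
      assume "f x \<in> P"
      then obtain j where "j < 2*k" "even j" "f x = f j" unfolding P_def by auto
      with f(1) x show "even x" by (metis inj_onD lessThan_iff)
    qed (use x in \<open>auto simp: P_def\<close>)
    ultimately show ?thesis by blast
  qed
  let ?h = "\<lambda>T. T \<union> P"
  have inj: "inj_on ?h (Pow ({..<n} - V))"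
  proof (rule inj_onI)
    fix T1 T2 assume "T1 \<in> Pow ({..<n} - V)" "T2 \<in> Pow ({..<n} - V)" "T1 \<union> P = T2 \<union> P"
    with PV show "T1 = T2" by blast
  qed
  have img: "?h ` Pow ({..<n} - V) \<subseteq> {S \<in> Pow {..<n}. F \<subseteq> crossE S E}"
  proof
    fix S assume "S \<in> ?h ` Pow ({..<n} - V)"
    then obtain T where T: "T \<subseteq> {..<n} - V" "S = T \<union> P" by auto
    have "S \<subseteq> {..<n}" using T PV Vn by auto
    moreover have "F \<subseteq> crossE S E"
    proof
      fix e assume e: "e \<in> F"
      then obtain i where i: "i < 2*k" "e = {f i, f ((i + 1) mod (2*k))}" using f(2) by auto
      define j where "j = (i + 1) mod (2*k)"
      have j: "j < 2*k" unfolding j_def using assms(4) by simp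
      have par: "even i \<longleftrightarrow> odd j"
      proof (cases "i+1 < 2*k")
        case True then show ?thesis unfolding j_def by simp
      next
        case False then have "i = 2*k - 1" using i by simp
        moreover have "(2*k - 1 + 1) mod (2*k) = 0" using assms(4) by simp
        ultimately show ?thesis unfolding j_def using assms(4) by simp
      qed
      have "e \<in> E" using e assms(2) by auto
      moreover have "\<exists>u v. e = {u,v} \<and> u\<in>S \<and> v\<notin>S"
      proof (cases "even i")
        case True
        then show ?thesis using mem[OF i(1) T(1)] mem[OF j T(1)] par T(2) i(2) j_def by auto
      next
        case False
        then show ?thesis using mem[OF i(1) T(1)] mem[OF j T(1)] par T(2) i(2) j_def
          by (intro exI[of _ "f j"] exI[of _ "f i"]) auto
      qed
      ultimately show "e \<in> crossE S E" unfolding crossE_def by blast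
    qed
    ultimately show "S \<in> {S \<in> Pow {..<n}. F \<subseteq> crossE S E}" by blast
  qed
  have "card (Pow ({..<n} - V)) = 2^(n - 2*k)"
    using Vn cV by (simp add: card_Pow card_Diff_subset finite_subset)
  moreover have "card (Pow ({..<n} - V)) \<le> card {S \<in> Pow {..<n}. F \<subseteq> crossE S E}"
    by (rule card_inj_on_le[OF inj img]) simp
  ultimately show ?thesis using kn by simp
qed

lemma dcount:
  assumes "finite A" "finite B"
  shows "(\<Sum>a\<in>A. card {b\<in>B. P a b}) = (\<Sum>b\<in>B. card {a\<in>A. P a b})"
proof -
  have c: "card {x\<in>X. Q x} = (\<Sum>x\<in>X. if Q x then 1 else 0)" if "finite X" for X and Q :: "'c \<Rightarrow> bool"
    using that by (simp add: sum.If_cases Int_def)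
  show ?thesis using assms by (simp add: c sum.swap[of _ A B])
qed

lemma main_ineq:
  assumes "E \<in> graph_edges n" "k \<ge> 1"
  shows "\<exists>S. card {F. F \<subseteq> E \<and> cycle_edges (2*k) F}
            \<le> 4^k * card {F. F \<subseteq> crossE S E \<and> cycle_edges (2*k) F}"
proof (rule ccontr)
  define C where "C = {F. F \<subseteq> E \<and> cycle_edges (2*k) F}"
  define g where "g S = card {F\<in>C. F \<subseteq> crossE S E}" for S
  have ceq: "{F. F \<subseteq> crossE S E \<and> cycle_edges (2*k) F} = {F\<in>C. F \<subseteq> crossE S E}" for S
    unfolding C_def using cross_sub[of S E] by auto
  assume "\<not> ?thesis"
  hence lt: "4^k * g S < card C" for S unfolding g_def C_def using ceq by (metis C_def not_le)
  hence "C \<noteq> {}" by (metis card.empty not_less0)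
  then obtain F0 where "F0 \<in> C" by auto
  hence kn: "2*k \<le> n" using cnt[of k F0 E n] assms unfolding C_def by auto
  have fE: "finite E" using fin_graph assms(1) .
  have fC: "finite C" unfolding C_def using fE by (simp add: finite_subset[of _ "Pow E"] subset_iff)
  have "(\<Sum>S\<in>Pow {..<n}. 4^k * g S) < (\<Sum>S\<in>Pow {..<n}. card C)"
    by (rule sum_strict_mono) (auto simp: lt)
  hence A1: "4^k * (\<Sum>S\<in>Pow {..<n}. g S) < 2^n * card C"
    by (simp add: sum_distrib_left card_Pow)
  have "(\<Sum>S\<in>Pow {..<n}. g S) = (\<Sum>F\<in>C. card {S\<in>Pow {..<n}. F \<subseteq> crossE S E})"
    unfolding g_def by (rule dcount) (auto simp: fC)
  also have "\<dots> \<ge> (\<Sum>F\<in>C. 2^(n-2*k))"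
    by (rule sum_mono) (use cnt assms in \<open>auto simp: C_def\<close>)
  finally have A2: "card C * 2^(n-2*k) \<le> (\<Sum>S\<in>Pow {..<n}. g S)" by simp
  have "(4::nat)^k * 2^(n-2*k) = 2^n"
  proof -
    have "(4::nat)^k = 2^(2*k)" by (simp add: power_mult)
    thus ?thesis using kn by (simp add: power_add[symmetric])
  qed
  hence "2^n * card C \<le> 4^k * (\<Sum>S\<in>Pow {..<n}. g S)"
    using mult_le_mono2[OF A2, of "4^k"] by (simp add: algebra_simps)
  with A1 show False by simp
qed

theorem lemma1:
  fixes A :: "nat set" and k :: nat
  assumes "\<forall>a\<in>A. a \<ge> 3"
    and "k \<ge> 2"
    and "2 * k \<notin> A"
  shows "(\<lambda>n. real (ex_cycles n (2 * k) A))
           \<in> \<Theta>(\<lambda>n. real (ex_cycles n (2 * k) {a \<in> A. even a}))"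
proof -
  define Ae where "Ae = {a \<in> A. even a}"
  define SS where "SS B n = {num_cycles (2*k) E | E. E \<in> graph_edges n \<and> (\<forall>b\<in>B. \<not> has_cycle b E)}" for B n
  have exd: "ex_cycles n (2*k) B = Max (SS B n)" for n B unfolding ex_cycles_def SS_def by simp
  have fin: "finite (SS B n)" for B n
  proof -
    have "SS B n \<subseteq> num_cycles (2*k) ` graph_edges n" unfolding SS_def by auto
    thus ?thesis using fin_graphs finite_subset by blast
  qed
  have empty_ok: "\<not> has_cycle b {}" if "b \<ge> 3" for b
  proof
    assume "has_cycle b {}"
    then have "cycle_edges b {}" unfolding has_cycle_def by auto
    then obtain f where "{} = (\<lambda>i. {f i, f ((i + 1) mod b)}) ` {..<b}"
      unfolding cycle_edges_def by blast
    hence "{..<b} = ({}::nat set)" by auto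
    with that show False by (simp add: lessThan_empty_iff)
  qed
  have e0: "{} \<in> graph_edges n" for n unfolding graph_edges_def by auto
  have ne: "SS B n \<noteq> {}" if "B \<subseteq> A" for B n
  proof -
    have "num_cycles (2*k) {} \<in> SS B n" unfolding SS_def using e0 empty_ok assms(1) that by blast
    thus ?thesis by auto
  qed
  have AeA: "Ae \<subseteq> A" unfolding Ae_def by auto
  have le1: "ex_cycles n (2*k) A \<le> ex_cycles n (2*k) Ae" for n
  proof -
    have "SS A n \<subseteq> SS Ae n" unfolding SS_def using AeA by blast
    thus ?thesis unfolding exd by (rule Max_mono[OF _ ne[of A] fin]) simp
  qed
  have le2: "ex_cycles n (2*k) Ae \<le> 4^k * ex_cycles n (2*k) A" for n
  proof -
    have "Max (SS Ae n) \<in> SS Ae n" using Max_in[OF fin ne[OF AeA]] .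
    then obtain E where E: "Max (SS Ae n) = num_cycles (2*k) E" "E \<in> graph_edges n"
      "\<forall>b\<in>Ae. \<not> has_cycle b E" unfolding SS_def by blast
    obtain S where S: "num_cycles (2*k) E \<le> 4^k * num_cycles (2*k) (crossE S E)"
      using main_ineq[OF E(2)] assms(2) unfolding num_cycles_def by fastforce
    have cg: "crossE S E \<in> graph_edges n" using E(2) cross_sub unfolding graph_edges_def by blast
    have cok: "\<forall>b\<in>A. \<not> has_cycle b (crossE S E)"
    proof (intro ballI notI)
      fix b assume b: "b \<in> A" "has_cycle b (crossE S E)"
      then obtain F where F: "F \<subseteq> crossE S E" "cycle_edges b F" unfolding has_cycle_def by blast
      show False
      proof (cases "even b")
        case True
        hence "b \<in> Ae" using b unfolding Ae_def by auto
        moreover have "has_cycle b E" using F cross_sub unfolding has_cycle_def by blast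
        ultimately show False using E(3) by blast
      next
        case False
        then show False using bip F by blast
      qed
    qed
    have "num_cycles (2*k) (crossE S E) \<in> SS A n" unfolding SS_def using cg cok by blast
    hence "num_cycles (2*k) (crossE S E) \<le> Max (SS A n)" using Max_ge[OF fin] by blast
    hence "4^k * num_cycles (2*k) (crossE S E) \<le> 4^k * Max (SS A n)" by simp
    thus ?thesis unfolding exd using E(1) S by linarith
  qed
  show ?thesis unfolding Ae_def[symmetric]
  proof (rule bigthetaI'[of "1 / 4^k" 1])
    show "eventually (\<lambda>n. 1 / 4^k * norm (real (ex_cycles n (2 * k) Ae)) \<le> norm (real (ex_cycles n (2 * k) A))
        \<and> norm (real (ex_cycles n (2 * k) A)) \<le> 1 * norm (real (ex_cycles n (2 * k) Ae))) at_top"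
    proof (rule always_eventually, intro allI conjI)
      fix n
      have "real (ex_cycles n (2*k) Ae) \<le> 4^k * real (ex_cycles n (2*k) A)"
        using le2[of n] by (metis of_nat_le_iff of_nat_mult of_nat_numeral of_nat_power)
      thus "1 / 4^k * norm (real (ex_cycles n (2 * k) Ae)) \<le> norm (real (ex_cycles n (2 * k) A))"
        by (simp add: field_simps)
      show "norm (real (ex_cycles n (2 * k) A)) \<le> 1 * norm (real (ex_cycles n (2 * k) Ae))"
        using le1[of n] by simp
    qed
  qed auto
qed

end
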